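(* $\mathcal{OBLOT}^{F}_{\mathcal{F.V.}} > \mathcal{OBLOT}^{F}_{\mathcal{L.V.}}$, i.e. the model $\mathcal{OBLOT}$ under the fully synchronous scheduler with full visibility is computationally more powerful than the model $\mathcal{OBLOT}$ under the fully synchronous scheduler with limited visibility.
   Context: Robots are anonymous, identical, autonomous computational entities viewed as points moving in the Euclidean plane. Each has its own local coordinate system, with no agreement between robots and no common chirality, and perceives itself at its origin. Robots operate in Look-Compute-Move cycles. In Look a robot takes an instantaneous snapshot of the positions (and visible lights, if any) of the robots it can see. In Compute it runs the common algorithm on the snapshot to obtain a destination. In Move it moves there. Models: - $\mathcal{OBLOT}$: robots are oblivious (no memory of previous cycles) and silent (no means of communication). - $\mathcal{LUMI}$: each robot carries a persistent light whose color is taken from a finite set and is set at the end of Compute; the light is visible to the robot itself and to the other robots. - $\mathcal{FSTA}$: the light is internal, visible only to its owner. It acts as a finite persistent state; there is no communication. - $\mathcal{FCOM}$: the light is visible only to the other robots. A robot does not see its own light and is otherwise oblivious. Schedulers: time is divided into rounds. Under the semi-synchronous scheduler $S$ (SSYNCH), in each round an adversarially chosen set of robots is activated and they perform one full cycle in perfect synchronization; every robot is activated infinitely often. Under the fully synchronous scheduler $F$ (FSYNCH), every robot is activated in every round. Visibility: - Full visibility $\mathcal{F.V.}$: every robot sees all robots. - Limited visibility $\mathcal{L.V.}$: a robot sees only the robots within a fixed distance $V_r$ of its current position, with $V_r$ the same for all robots. The visibility graph (robots adjacent iff they see each other) of the initial configuration is assumed connected. Relations: $\mathcal{M}^X_V$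 denotes model $\mathcal{M}$ under scheduler $X$ with visibility $V$. For a team $R$ of robots, $Task(\mathcal{M},X,V;R)$ is the set of problems (tasks where robots must form some configuration(s) subject to conditions) solvable by $R$ in that setting. $\mathcal{R}$ is the set of all teams, and $\mathcal{R}_n$ the set of teams of size $n$. - $\mathcal{M}^{X_1}_{V_1} \ge \mathcal{N}^{X_2}_{V_2}$ if for all $R\in\mathcal{R}$, $Task(\mathcal{M},X_1,V_1;R)\supseteq Task(\mathcal{N},X_2,V_2;R)$. - $>$ means $\ge$ holds and there exists $R\in\mathcal{R}$ with $Task(\mathcal{M},X_1,V_1;R)\setminus Task(\mathcal{N},X_2,V_2;R)\neq\emptyset$. - $\perp$ (incomparable) means there exist $R_1,R_2\in\mathcal{R}$ with $Task(\mathcal{M},X_1,V_1;R_1)\setminus Task(\mathcal{N},X_2,V_2;R_1)\neq\emptyset$ and $Task(\mathcal{N},X_2,V_2;R_2)\setminus Task(\mathcal{M},X_1,V_1;R_2)\neq\emptyset$. *)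

theory Defs
  imports "HOL-Analysis.Analysis"
begin

text \<open>Robots in the Euclidean plane (modelled as complex numbers), model OBLOT,
  fully synchronous scheduler F.\<close>

datatype visibility = FullVis | LimitedVis

type_synonym config = "complex list"
type_synonym execution = "nat \<Rightarrow> config"
type_synonym problem = "execution \<Rightarrow> bool"
type_synonym algorithm = "complex set \<Rightarrow> complex"

text \<open>A team: number of robots n and common visibility range Vr.\<close>
type_synonym team = "nat \<times> real"

definition teams :: "team set" where
  "teams = {(n, Vr). 1 \<le> n \<and> 0 < Vr}"

text \<open>Local coordinate system orientation: rotation or reflection (no common
  chirality); the origin is the robot's own position.\<close>
definition local_frame :: "(complex \<Rightarrow> complex) \<Rightarrow> bool" where
  "local_frame f \<longleftrightarrow> (\<exists>u. cmod u = 1 \<and> (f = (\<lambda>z. u * z) \<or> f = (\<lambda>z. u * cnj z)))"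

definition sees :: "visibility \<Rightarrow> real \<Rightarrow> complex \<Rightarrow> complex \<Rightarrow> bool" where
  "sees vis Vr p q \<longleftrightarrow> (vis = FullVis \<or> dist p q \<le> Vr)"

definition snapshot ::
  "visibility \<Rightarrow> real \<Rightarrow> (complex \<Rightarrow> complex) \<Rightarrow> config \<Rightarrow> complex \<Rightarrow> complex set" where
  "snapshot vis Vr f c p = (\<lambda>q. f (q - p)) ` {q \<in> set c. sees vis Vr p q}"

definition fsync_step ::
  "visibility \<Rightarrow> real \<Rightarrow> algorithm \<Rightarrow> (nat \<Rightarrow> complex \<Rightarrow> complex) \<Rightarrow> config \<Rightarrow> config" where
  "fsync_step vis Vr A fr c =
     map (\<lambda>i. c ! i + inv (fr i) (A (snapshot vis Vr (fr i) c (c ! i)))) [0..<length c]"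

primrec fsync_exec ::
  "visibility \<Rightarrow> real \<Rightarrow> algorithm \<Rightarrow> (nat \<Rightarrow> complex \<Rightarrow> complex) \<Rightarrow> config \<Rightarrow> execution" where
  "fsync_exec vis Vr A fr c0 0 = c0"
| "fsync_exec vis Vr A fr c0 (Suc t) = fsync_step vis Vr A fr (fsync_exec vis Vr A fr c0 t)"

definition vis_connected :: "real \<Rightarrow> config \<Rightarrow> bool" where
  "vis_connected Vr c \<longleftrightarrow>
     (\<forall>i<length c. \<forall>j<length c.
        (i, j) \<in> {(a, b). a < length c \<and> b < length c \<and> dist (c ! a) (c ! b) \<le> Vr}\<^sup>*)"

definition Task_OBLOT_F :: "visibility \<Rightarrow> team \<Rightarrow> problem set" where
  "Task_OBLOT_F vis R = (case R of (n, Vr) \<Rightarrow>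
     {P. \<exists>A :: algorithm. \<forall>c0 fr.
           length c0 = n \<and> vis_connected Vr c0 \<and> (\<forall>i<n. local_frame (fr i))
           \<longrightarrow> P (fsync_exec vis Vr A fr c0)})"

definition model_ge :: "(team \<Rightarrow> problem set) \<Rightarrow> (team \<Rightarrow> problem set) \<Rightarrow> bool" where
  "model_ge M N \<longleftrightarrow> (\<forall>R\<in>teams. N R \<subseteq> M R)"

definition model_gt :: "(team \<Rightarrow> problem set) \<Rightarrow> (team \<Rightarrow> problem set) \<Rightarrow> bool" where
  "model_gt M N \<longleftrightarrow> model_ge M N \<and> (\<exists>R\<in>teams. M R - N R \<noteq> {})"

end

theory Submission
  imports Defs
begin

lemma lf_norm: "local_frame f \<Longrightarrow> cmod (f z) = cmod z"
  unfolding local_frame_def by (auto simp: norm_mult)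

lemma lf_bij: assumes "local_frame f" shows "bij f"
proof -
  obtain u where u: "cmod u = 1" "f = (\<lambda>z. u * z) \<or> f = (\<lambda>z. u * cnj z)"
    using assms unfolding local_frame_def by blast
  hence u0: "u \<noteq> 0" by auto
  show ?thesis
  proof (cases "f = (\<lambda>z. u * z)")
    case True
    show ?thesis unfolding bij_def inj_def surj_def True
      using u0 by (auto intro!: exI[where x="_ / u"])
  next
    case False
    hence f: "f = (\<lambda>z. u * cnj z)" using u by blast
    show ?thesis unfolding bij_def inj_def surj_def f
    proof (intro conjI allI impI)
      fix x y assume "u * cnj x = u * cnj y" thus "x = y" using u0 by simp
    next
      fix y show "\<exists>x. y = u * cnj x"
        using u0 by (intro exI[where x="cnj (y / u)"]) simp
    qed
  qed
qed

lemma lf_zero: "local_frame f \<Longrightarrow> f 0 = 0"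
  unfolding local_frame_def by auto

lemma lf_inv0: assumes "local_frame f" shows "inv f w = 0 \<longleftrightarrow> w = 0"
proof -
  have "(0 = inv f w) \<longleftrightarrow> f 0 = w" using bij_inv_eq_iff[OF lf_bij[OF assms]] by blast
  thus ?thesis using lf_zero[OF assms] by auto
qed

lemma snap_lim:
  assumes "local_frame f"
  shows "snapshot LimitedVis Vr f c p = {z \<in> snapshot FullVis Vr f c p. cmod z \<le> Vr}"
  unfolding snapshot_def sees_def using lf_norm[OF assms]
  by (auto simp: dist_norm norm_minus_commute)

lemma step_eq:
  assumes "\<forall>i<length c. local_frame (fr i)"
  shows "fsync_step FullVis Vr (\<lambda>S. A {z\<in>S. cmod z \<le> Vr}) fr c = fsync_step LimitedVis Vr A fr c"
  unfolding fsync_step_def using assms by (auto simp: snap_lim)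

lemma exec_eq:
  assumes "length c0 = n" "\<forall>i<n. local_frame (fr i)"
  shows "fsync_exec FullVis Vr (\<lambda>S. A {z\<in>S. cmod z \<le> Vr}) fr c0 t = fsync_exec LimitedVis Vr A fr c0 t
    \<and> length (fsync_exec LimitedVis Vr A fr c0 t) = n"
proof (induction t)
  case 0 then show ?case using assms by simp
next
  case (Suc t)
  then show ?case using assms step_eq[of "fsync_exec LimitedVis Vr A fr c0 t" fr Vr A]
    by (simp add: fsync_step_def)
qed

lemma ge: "model_ge (Task_OBLOT_F FullVis) (Task_OBLOT_F LimitedVis)"
  unfolding model_ge_def
proof (intro ballI subsetI)
  fix R P assume R: "R \<in> teams" and P: "P \<in> Task_OBLOT_F LimitedVis R"
  obtain n Vr where R': "R = (n, Vr)" by (cases R)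
  from P obtain A where A: "\<forall>c0 fr. length c0 = n \<and> vis_connected Vr c0 \<and> (\<forall>i<n. local_frame (fr i))
           \<longrightarrow> P (fsync_exec LimitedVis Vr A fr c0)"
    unfolding Task_OBLOT_F_def R' by auto
  show "P \<in> Task_OBLOT_F FullVis R"
    unfolding Task_OBLOT_F_def R'
  proof (simp, intro exI[where x="\<lambda>S. A {z\<in>S. cmod z \<le> Vr}"] allI impI)
    fix c0 fr assume h: "length c0 = n \<and> vis_connected Vr c0 \<and> (\<forall>i<n. local_frame (fr i))"
    have "fsync_exec FullVis Vr (\<lambda>S. A {z\<in>S. cmod z \<le> Vr}) fr c0 = fsync_exec LimitedVis Vr A fr c0"
      using exec_eq[of c0 n fr Vr A] h by auto
    thus "P (fsync_exec FullVis Vr (\<lambda>S. A {z\<in>S. cmod z \<le> Vr}) fr c0)" using A h by simp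
  qed
qed

definition Pb :: problem where
  "Pb e = (e 1 ! 0 = e 0 ! 0 \<longleftrightarrow> card (set (e 0)) = 3)"

lemma full_solves: "Pb \<in> Task_OBLOT_F FullVis (3, 1)"
  unfolding Task_OBLOT_F_def
proof (simp, intro exI[where x="\<lambda>S. if card S = 3 then 0 else 1"] allI impI)
  fix c0 :: config and fr :: "nat \<Rightarrow> complex \<Rightarrow> complex" assume h: "length c0 = 3 \<and> vis_connected 1 c0 \<and> (\<forall>i<3. local_frame (fr i))"
  hence lf: "local_frame (fr 0)" by auto
  let ?S = "snapshot FullVis 1 (fr 0) c0 (c0 ! 0)"
  have "?S = (\<lambda>q. fr 0 (q - c0 ! 0)) ` set c0" unfolding snapshot_def sees_def by auto
  moreover have "inj (\<lambda>q. fr 0 (q - c0 ! 0))"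
    using bij_is_inj[OF lf_bij[OF lf]] unfolding inj_def by (metis diff_add_cancel)
  ultimately have cS: "card ?S = card (set c0)" by (simp add: card_image inj_on_def inj_def)
  have e1: "fsync_exec FullVis 1 (\<lambda>S. if card S = 3 then 0 else 1) fr c0 1 ! 0
     = c0 ! 0 + inv (fr 0) (if card ?S = 3 then 0 else 1)"
    using h by (simp add: fsync_step_def)
  show "Pb (fsync_exec FullVis 1 (\<lambda>S. if card S = 3 then 0 else 1) fr c0)"
    unfolding Pb_def e1 cS using lf_inv0[OF lf] by auto
qed

lemma lim_not: "Pb \<notin> Task_OBLOT_F LimitedVis (3, 1)"
proof
  assume "Pb \<in> Task_OBLOT_F LimitedVis (3, 1)"
  then obtain A where A: "\<forall>c0 fr. length c0 = 3 \<and> vis_connected 1 c0 \<and> (\<forall>i<3. local_frame (fr i))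
           \<longrightarrow> Pb (fsync_exec LimitedVis 1 A fr c0)"
    unfolding Task_OBLOT_F_def by auto
  define fr :: "nat \<Rightarrow> complex \<Rightarrow> complex" where "fr = (\<lambda>i z. z)"
  have lf: "\<forall>i<3. local_frame (fr i)"
    unfolding fr_def local_frame_def by (auto intro!: exI[where x=1])
  define c1 :: config where "c1 = [0, 1, 2]"
  define c2 :: config where "c2 = [0, 1, 1]"
  let ?R1 = "{(a, b). a < length c1 \<and> b < length c1 \<and> dist (c1 ! a) (c1 ! b) \<le> 1}"
  have e01: "(0,1) \<in> ?R1" "(1,0) \<in> ?R1" "(1,2) \<in> ?R1" "(2,1) \<in> ?R1"
    by (auto simp: c1_def dist_norm)
  have conn1: "vis_connected 1 c1" unfolding vis_connected_def
  proof (intro allI impI)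
    fix i j assume "i < length c1" "j < length c1"
    hence i: "i = 0 \<or> i = 1 \<or> i = 2" and j: "j = 0 \<or> j = 1 \<or> j = 2" by (auto simp: c1_def)
    have a: "(i,1) \<in> ?R1\<^sup>*" using i e01 by auto
    have b: "(1,j) \<in> ?R1\<^sup>*" using j e01 by auto
    show "(i, j) \<in> ?R1\<^sup>*" using rtrancl_trans[OF a b] .
  qed
  have conn2: "vis_connected 1 c2" unfolding vis_connected_def
  proof (intro allI impI)
    fix i j assume "i < length c2" "j < length c2"
    hence i: "i = 0 \<or> i = 1 \<or> i = 2" and j: "j = 0 \<or> j = 1 \<or> j = 2" by (auto simp: c2_def)
    show "(i, j) \<in> {(a, b). a < length c2 \<and> b < length c2 \<and> dist (c2 ! a) (c2 ! b) \<le> 1}\<^sup>*"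
      apply (rule r_into_rtrancl) using i j by (auto simp: c2_def dist_norm)
  qed
  have s1: "snapshot LimitedVis 1 (fr 0) c1 (c1 ! 0) = {0, 1}"
    unfolding snapshot_def sees_def fr_def c1_def by (auto simp: dist_norm)
  have s2: "snapshot LimitedVis 1 (fr 0) c2 (c2 ! 0) = {0, 1}"
    unfolding snapshot_def sees_def fr_def c2_def by (auto simp: dist_norm)
  have inv_fr: "inv (fr 0) = (\<lambda>z. z)" unfolding fr_def by simp
  have P1: "Pb (fsync_exec LimitedVis 1 A fr c1)" using A lf conn1 by (auto simp: c1_def)
  have P2: "Pb (fsync_exec LimitedVis 1 A fr c2)" using A lf conn2 by (auto simp: c2_def)
  have "card (set c1) = 3" by (simp add: c1_def)
  moreover have "card (set c2) = 2" by (simp add: c2_def)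
  ultimately show False using P1 P2 s1 s2 inv_fr
    unfolding Pb_def by (simp add: fsync_step_def c1_def c2_def)
qed

theorem theorem1:
  shows "model_gt (Task_OBLOT_F FullVis) (Task_OBLOT_F LimitedVis)"
  unfolding model_gt_def
proof (intro conjI ge bexI[where x="(3,1)"])
  show "(3, 1) \<in> teams" by (simp add: teams_def)
  show "Task_OBLOT_F FullVis (3, 1) - Task_OBLOT_F LimitedVis (3, 1) \<noteq> {}"
    using full_solves lim_not by blast
qed

end
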